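(* The monoid $\mathrm{Mon}(R)$ is a BF-monoid. Moreover: (1) $\mathrm{Mon}(R)$ is neither locally finitely generated nor transfer Krull; (2) $\mathcal U_k(\mathrm{Mon}(R))=\mathbb N_{\ge2}$ for all $k\ge2$; (3) $\mathsf L_{\mathrm{Mon}(R)}(\mathfrak a_k)=[2,k]$ for all $k\ge2$, where $\mathfrak a_k=\langle X,Y\rangle^k$; (4) $\mathrm{Mon}(R)$ is fully elastic.
   Context: Let $K$ be a field, $N\ge2$, $R=K[X_1,\dots,X_N]$, $X=X_1$, $Y=X_2$. $\mathrm{Mon}(R)$ is the monoid of nonzero monomial ideals of $R$ under ideal multiplication, with identity $R$ (its only unit). An atom of $\mathrm{Mon}(R)$ is an $I\ne R$ in $\mathrm{Mon}(R)$ not a product of two elements of $\mathrm{Mon}(R)\setminus\{R\}$. For a monoid $H$ (commutative, unit-cancellative) and $a\in H$, $\mathsf L_H(a)$ is the set of $k$ such that $a$ is a product of $k$ atoms, and $\mathcal L(H)=\{\mathsf L_H(a):a\in H\}$. $H$ is a BF-monoid if every $\mathsf L_H(a)$ is finite and nonempty. $\mathcal U_k(H)=\bigcup\{L\in\mathcal L(H):k\in L\}$. $H$ is locally finitely generated if for every $a\in H$ the smallest divisor-closed submonoid of $H$ containing $a$ is finitely generated up to units. A Krull monoid is a commutative cancellative monoid satisfying the ascending chain condition on divisorial ideals and completely integrally closed; a monoid homomorphism $\theta:H\to K'$ is a transfer homomorphism if $K'=\theta(H)K'^\times$, $\theta^{-1}(K'^\times)=H^\times$, and whenever $\theta(a)=\beta\gamma$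 there are $b,c\in H$ with $a=bc$, $\theta(b)\in\beta K'^\times$, $\theta(c)\in\gamma K'^\times$; $H$ is transfer Krull if there is a transfer homomorphism from $H$ to a Krull monoid. For a finite nonempty $L\subseteq\mathbb N$, $\rho(L)=\max L/\min L$ (with $\rho(\{0\})=1$), and $\rho(H)=\sup\{\rho(L):L\in\mathcal L(H)\}$; $H$ is fully elastic if for every rational $q$ with $1<q<\rho(H)$ there is $L\in\mathcal L(H)$ with $\rho(L)=q$. $[x,y]=\{z\in\mathbb Z:x\le z\le y\}$. *)

theory Defs
  imports "HOL-Algebra.Group" "HOL-Library.Extended_Real"
begin

text \<open>A nonzero monomial ideal of the polynomial ring in the variables indexed by the
  finite type 'n is determined by the set of exponent vectors (elements of 'n => nat)
  of the monomials it contains; these sets are exactly the nonempty upward closed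
  subsets of ('n => nat).  The product of two monomial ideals is generated by the
  products of monomials, i.e. corresponds to the sumset of the exponent sets.
  The identity R corresponds to UNIV (the exponent set of the unit ideal).
  None of this depends on the field K.\<close>

definition MonR :: "('n::finite \<Rightarrow> nat) set monoid" where
  "MonR = \<lparr> carrier = {I. I \<noteq> {} \<and> (\<forall>a\<in>I. \<forall>b. a \<le> b \<longrightarrow> b \<in> I)},
            mult = (\<lambda>I J. {(\<lambda>i. a i + b i) | a b. a \<in> I \<and> b \<in> J}),
            one = UNIV \<rparr>"

definition XY_ideal :: "'n::finite \<Rightarrow> 'n \<Rightarrow> ('n \<Rightarrow> nat) set" where
  "XY_ideal x y = {a. 1 \<le> a x \<or> 1 \<le> a y}"

definition lprod :: "('a, 'b) monoid_scheme \<Rightarrow> 'a list \<Rightarrow> 'a" where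
  "lprod H xs = foldr (\<lambda>u v. u \<otimes>\<^bsub>H\<^esub> v) xs \<one>\<^bsub>H\<^esub>"

definition atom :: "('a, 'b) monoid_scheme \<Rightarrow> 'a \<Rightarrow> bool" where
  "atom H a \<longleftrightarrow> a \<in> carrier H \<and> a \<notin> Units H \<and>
     (\<forall>b\<in>carrier H. \<forall>c\<in>carrier H. a = b \<otimes>\<^bsub>H\<^esub> c \<longrightarrow> b \<in> Units H \<or> c \<in> Units H)"

definition Lset :: "('a, 'b) monoid_scheme \<Rightarrow> 'a \<Rightarrow> nat set" where
  "Lset H a = {k. \<exists>xs. length xs = k \<and> (\<forall>z\<in>set xs. atom H z) \<and> a = lprod H xs}"

definition LL :: "('a, 'b) monoid_scheme \<Rightarrow> nat set set" where
  "LL H = Lset H ` carrier H"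

definition BF_monoid :: "('a, 'b) monoid_scheme \<Rightarrow> bool" where
  "BF_monoid H \<longleftrightarrow> (\<forall>a\<in>carrier H. finite (Lset H a) \<and> Lset H a \<noteq> {})"

definition Uk :: "('a, 'b) monoid_scheme \<Rightarrow> nat \<Rightarrow> nat set" where
  "Uk H k = \<Union>{L \<in> LL H. k \<in> L}"

definition rho :: "nat set \<Rightarrow> real" where
  "rho L = (if L = {0} then 1 else real (Max L) / real (Min L))"

definition rho_monoid :: "('a, 'b) monoid_scheme \<Rightarrow> ereal" where
  "rho_monoid H = Sup ((\<lambda>L. ereal (rho L)) ` LL H)"

definition fully_elastic :: "('a, 'b) monoid_scheme \<Rightarrow> bool" where
  "fully_elastic H \<longleftrightarrow>
     (\<forall>q::rat. 1 < q \<and> ereal (of_rat q) < rho_monoid H \<longrightarrow> (\<exists>L\<in>LL H. rho L = of_rat q))"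

definition divides_in :: "('a, 'b) monoid_scheme \<Rightarrow> 'a \<Rightarrow> 'a \<Rightarrow> bool" where
  "divides_in H b a \<longleftrightarrow> (\<exists>c\<in>carrier H. a = b \<otimes>\<^bsub>H\<^esub> c)"

definition div_closed_submonoid :: "('a, 'b) monoid_scheme \<Rightarrow> 'a set \<Rightarrow> bool" where
  "div_closed_submonoid H S \<longleftrightarrow> S \<subseteq> carrier H \<and> \<one>\<^bsub>H\<^esub> \<in> S \<and>
     (\<forall>u\<in>S. \<forall>v\<in>S. u \<otimes>\<^bsub>H\<^esub> v \<in> S) \<and>
     (\<forall>a\<in>S. \<forall>b\<in>carrier H. divides_in H b a \<longrightarrow> b \<in> S)"

definition dc_hull :: "('a, 'b) monoid_scheme \<Rightarrow> 'a \<Rightarrow> 'a set" where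
  "dc_hull H a = \<Inter>{S. div_closed_submonoid H S \<and> a \<in> S}"

definition sub_units :: "('a, 'b) monoid_scheme \<Rightarrow> 'a set \<Rightarrow> 'a set" where
  "sub_units H S = {u \<in> S. \<exists>v\<in>S. u \<otimes>\<^bsub>H\<^esub> v = \<one>\<^bsub>H\<^esub> \<and> v \<otimes>\<^bsub>H\<^esub> u = \<one>\<^bsub>H\<^esub>}"

definition fg_up_to_units :: "('a, 'b) monoid_scheme \<Rightarrow> 'a set \<Rightarrow> bool" where
  "fg_up_to_units H S \<longleftrightarrow> (\<exists>E. finite E \<and> E \<subseteq> S \<and>
     (\<forall>s\<in>S. \<exists>u\<in>sub_units H S. \<exists>xs. set xs \<subseteq> E \<and> s = u \<otimes>\<^bsub>H\<^esub> lprod H xs))"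

definition locally_fg :: "('a, 'b) monoid_scheme \<Rightarrow> bool" where
  "locally_fg H \<longleftrightarrow> (\<forall>a\<in>carrier H. fg_up_to_units H (dc_hull H a))"

text \<open>A commutative cancellative monoid is represented as a submonoid D of an abelian
  group G (every such monoid embeds in its quotient group); its quotient group is
  q(D) = {a b^-1 : a, b in D}.\<close>

definition quot_grp :: "'g monoid \<Rightarrow> 'g set \<Rightarrow> 'g set" where
  "quot_grp G D = {a \<otimes>\<^bsub>G\<^esub> inv\<^bsub>G\<^esub> b | a b. a \<in> D \<and> b \<in> D}"

definition v_inv :: "'g monoid \<Rightarrow> 'g set \<Rightarrow> 'g set \<Rightarrow> 'g set" where
  "v_inv G D X = {z \<in> quot_grp G D. \<forall>w\<in>X. z \<otimes>\<^bsub>G\<^esub> w \<in> D}"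

definition divisorial_ideal :: "'g monoid \<Rightarrow> 'g set \<Rightarrow> 'g set \<Rightarrow> bool" where
  "divisorial_ideal G D A \<longleftrightarrow> A \<subseteq> D \<and> v_inv G D (v_inv G D A) = A"

definition Krull_in :: "'g monoid \<Rightarrow> 'g set \<Rightarrow> bool" where
  "Krull_in G D \<longleftrightarrow> comm_group G \<and> D \<subseteq> carrier G \<and> \<one>\<^bsub>G\<^esub> \<in> D \<and>
     (\<forall>u\<in>D. \<forall>v\<in>D. u \<otimes>\<^bsub>G\<^esub> v \<in> D) \<and>
     (\<forall>f :: nat \<Rightarrow> 'g set. (\<forall>n. divisorial_ideal G D (f n)) \<and> (\<forall>n. f n \<subseteq> f (Suc n))
        \<longrightarrow> (\<exists>m. \<forall>n\<ge>m. f n = f m)) \<and>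
     (\<forall>z\<in>quot_grp G D. (\<exists>c\<in>D. \<forall>n::nat. c \<otimes>\<^bsub>G\<^esub> (z [^]\<^bsub>G\<^esub> n) \<in> D) \<longrightarrow> z \<in> D)"

definition D_units :: "'g monoid \<Rightarrow> 'g set \<Rightarrow> 'g set" where
  "D_units G D = {u \<in> D. inv\<^bsub>G\<^esub> u \<in> D}"

definition transfer_hom :: "('a, 'b) monoid_scheme \<Rightarrow> 'g monoid \<Rightarrow> 'g set \<Rightarrow> ('a \<Rightarrow> 'g) \<Rightarrow> bool" where
  "transfer_hom H G D \<theta> \<longleftrightarrow>
     (\<forall>a\<in>carrier H. \<theta> a \<in> D) \<and> \<theta> \<one>\<^bsub>H\<^esub> = \<one>\<^bsub>G\<^esub> \<and>
     (\<forall>a\<in>carrier H. \<forall>b\<in>carrier H. \<theta> (a \<otimes>\<^bsub>H\<^esub> b) = \<theta> a \<otimes>\<^bsub>G\<^esub> \<theta> b) \<and>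
     D = {\<theta> a \<otimes>\<^bsub>G\<^esub> u | a u. a \<in> carrier H \<and> u \<in> D_units G D} \<and>
     {a \<in> carrier H. \<theta> a \<in> D_units G D} = Units H \<and>
     (\<forall>a\<in>carrier H. \<forall>\<beta>\<in>D. \<forall>\<gamma>\<in>D. \<theta> a = \<beta> \<otimes>\<^bsub>G\<^esub> \<gamma> \<longrightarrow>
        (\<exists>b\<in>carrier H. \<exists>c\<in>carrier H. a = b \<otimes>\<^bsub>H\<^esub> c \<and>
           (\<exists>u\<in>D_units G D. \<theta> b = \<beta> \<otimes>\<^bsub>G\<^esub> u) \<and> (\<exists>u\<in>D_units G D. \<theta> c = \<gamma> \<otimes>\<^bsub>G\<^esub> u)))"

text \<open>H is transfer Krull via a Krull monoid whose quotient group lives in type 'g.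
  Stating the negation for a free type variable 'g covers all Krull monoids.\<close>
definition transfer_Krull :: "('a, 'b) monoid_scheme \<Rightarrow> 'g itself \<Rightarrow> bool" where
  "transfer_Krull H (T :: 'g itself) \<longleftrightarrow>
     (\<exists>(G :: 'g monoid) D \<theta>. Krull_in G D \<and> transfer_hom H G D \<theta>)"

end

theory Submission imports Defs begin

definition up :: "('n \<Rightarrow> nat) set \<Rightarrow> bool" where
  "up I \<longleftrightarrow> (\<forall>a\<in>I. \<forall>b. a \<le> b \<longrightarrow> b \<in> I)"

definition sm :: "('n \<Rightarrow> nat) set \<Rightarrow> ('n \<Rightarrow> nat) set \<Rightarrow> ('n \<Rightarrow> nat) set" where
  "sm I J = {(\<lambda>i. a i + b i) | a b. a \<in> I \<and> b \<in> J}"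

lemma MonR_simps:
  "carrier (MonR :: ('n::finite \<Rightarrow> nat) set monoid) = {I. I \<noteq> {} \<and> up I}"
  "mult (MonR :: ('n::finite \<Rightarrow> nat) set monoid) = sm"
  "one (MonR :: ('n::finite \<Rightarrow> nat) set monoid) = UNIV"
  unfolding MonR_def up_def sm_def by (auto intro!: ext)

lemma sm_mem: "a \<in> I \<Longrightarrow> b \<in> J \<Longrightarrow> (\<lambda>i. a i + b i) \<in> sm I J"
  unfolding sm_def by blast

lemma sm_memE: "v \<in> sm I J \<Longrightarrow> (\<And>a b. a \<in> I \<Longrightarrow> b \<in> J \<Longrightarrow> v = (\<lambda>i. a i + b i) \<Longrightarrow> P) \<Longrightarrow> P"
  unfolding sm_def by blast

lemma up_sm: "up I \<Longrightarrow> up (sm I J)"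
  unfolding up_def
proof (intro ballI allI impI)
  fix v w assume I: "\<forall>a\<in>I. \<forall>b. a \<le> b \<longrightarrow> b \<in> I" and v: "v \<in> sm I J" and le: "v \<le> w"
  from v obtain a b where a: "a \<in> I" and b: "b \<in> J" and vv: "v = (\<lambda>i. a i + b i)" by (rule sm_memE)
  define a' where "a' = (\<lambda>i. w i - b i)"
  have "a \<le> a'" using le unfolding vv a'_def le_fun_def by (metis le_diff_conv2 le_add2 order_trans)
  hence "a' \<in> I" using I a by blast
  moreover have "w = (\<lambda>i. a' i + b i)"
  proof
    fix i have "b i \<le> w i" using le unfolding vv le_fun_def by (metis le_add2 order_trans)
    thus "w i = a' i + b i" unfolding a'_def by simp
  qed
  ultimately show "w \<in> sm I J" using b sm_mem by metis
qed

lemma sm_comm_sub: "sm I J \<subseteq> sm J I"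
proof
  fix v assume "v \<in> sm I J"
  then obtain a b where "a \<in> I" "b \<in> J" "v = (\<lambda>i. a i + b i)" by (rule sm_memE)
  moreover have "(\<lambda>i. a i + b i) = (\<lambda>i. b i + a i)" by (simp add: add.commute)
  ultimately show "v \<in> sm J I" using sm_mem by metis
qed

lemma sm_comm: "sm I J = sm J I"
  using sm_comm_sub by blast

lemma sm_assoc: "sm (sm I J) K = sm I (sm J K)"
  unfolding sm_def
  apply auto
   apply (rule_tac x=aa in exI, rule_tac x="\<lambda>i. ba i + b i" in exI, force simp: add.assoc)
  apply (rule_tac x="\<lambda>i. a i + aa i" in exI, rule_tac x=ba in exI, force simp: add.assoc)
  done

lemma sm_UNIV: "up I \<Longrightarrow> sm I UNIV = I"
proof
  assume u: "up I"
  show "sm I UNIV \<subseteq> I"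
  proof
    fix v assume "v \<in> sm I UNIV"
    then obtain a b where ab: "a \<in> I" "v = (\<lambda>i. a i + b i)" by (rule sm_memE)
    have "a \<le> v" unfolding ab le_fun_def by simp
    thus "v \<in> I" using u ab unfolding up_def by blast
  qed
  show "I \<subseteq> sm I UNIV"
  proof
    fix v assume "v \<in> I"
    moreover have "v = (\<lambda>i. v i + (\<lambda>_. 0::nat) i)" by simp
    ultimately show "v \<in> sm I UNIV" using sm_mem[of v I "\<lambda>_. 0" UNIV] by simp
  qed
qed

lemma sm_ne: "I \<noteq> {} \<Longrightarrow> J \<noteq> {} \<Longrightarrow> sm I J \<noteq> {}"
  unfolding sm_def by blast

lemma sm_UNIV_left: "up I \<Longrightarrow> sm UNIV I = I"
  by (metis sm_UNIV sm_comm)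

lemma MonR_comm_monoid: "comm_monoid (MonR :: ('n::finite \<Rightarrow> nat) set monoid)"
proof (rule comm_monoidI, unfold MonR_simps)
  show "UNIV \<in> {I. I \<noteq> {} \<and> up I}" by (simp add: up_def)
qed (auto simp: up_sm sm_ne sm_assoc sm_UNIV_left dest: sm_comm_sub[THEN subsetD])

lemma zero_in_up: "up I \<Longrightarrow> (\<lambda>_. 0) \<in> I \<Longrightarrow> I = UNIV"
  unfolding up_def by (auto simp: le_fun_def)

abbreviation MM :: "('n::finite \<Rightarrow> nat) set monoid" where "MM \<equiv> MonR"

lemma carrier_iff: "I \<in> carrier MM \<longleftrightarrow> I \<noteq> {} \<and> up I"
  by (simp add: MonR_simps)

lemma sm_UNIV_imp: "sm u v = UNIV \<Longrightarrow> up u \<Longrightarrow> u = UNIV"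
proof -
  assume h: "sm u v = UNIV" "up u"
  have "(\<lambda>_. 0) \<in> sm u v" using h by simp
  then obtain a b where ab: "a \<in> u" "(\<lambda>_::'a. 0::nat) = (\<lambda>i. a i + b i)" by (rule sm_memE)
  have "a = (\<lambda>_. 0)"
  proof
    fix i show "a i = 0" using fun_cong[OF ab(2), of i] by simp
  qed
  hence "(\<lambda>_. 0) \<in> u" using ab by simp
  thus ?thesis using h zero_in_up by blast
qed

lemma Units_MM: "Units MM = {UNIV}"
proof -
  interpret comm_monoid MM by (rule MonR_comm_monoid)
  have "u = UNIV" if "u \<in> Units MM" for u
  proof -
    from that obtain v where "v \<in> carrier MM" "u \<otimes>\<^bsub>MM\<^esub> v = UNIV" "u \<in> carrier MM"
      unfolding Units_def by (auto simp: MonR_simps)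
    thus ?thesis using sm_UNIV_imp by (auto simp: MonR_simps)
  qed
  moreover have "UNIV \<in> Units MM" using Units_one_closed by (simp add: MonR_simps)
  ultimately show ?thesis by blast
qed

lemma lprod_Nil: "lprod MM [] = UNIV" by (simp add: lprod_def MonR_simps)
lemma lprod_Cons: "lprod MM (z # zs) = sm z (lprod MM zs)" by (simp add: lprod_def MonR_simps)

lemma lprod_closed: "set xs \<subseteq> carrier MM \<Longrightarrow> lprod MM xs \<in> carrier MM"
proof (induction xs)
  case Nil thus ?case by (simp add: lprod_Nil carrier_iff up_def)
next
  case (Cons a xs)
  hence "lprod MM xs \<in> carrier MM" "a \<in> carrier MM" by auto
  thus ?case by (simp add: lprod_Cons carrier_iff up_sm sm_ne)
qed

lemma lprod_append: "set xs \<subseteq> carrier MM \<Longrightarrow> set ys \<subseteq> carrier MM \<Longrightarrow>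
   lprod MM (xs @ ys) = sm (lprod MM xs) (lprod MM ys)"
proof (induction xs)
  case Nil thus ?case using lprod_closed[of ys] by (simp add: lprod_Nil sm_UNIV_left carrier_iff)
next
  case (Cons a xs) thus ?case by (simp add: lprod_Cons sm_assoc)
qed

lemma lprod_replicate: "z \<in> carrier MM \<Longrightarrow> lprod MM (replicate n z) = z [^]\<^bsub>MM\<^esub> n"
proof (induction n)
  case 0 thus ?case by (simp add: lprod_Nil MonR_simps)
next
  case (Suc n)
  interpret comm_monoid MM by (rule MonR_comm_monoid)
  have "lprod MM (replicate (Suc n) z) = sm z (z [^]\<^bsub>MM\<^esub> n)" using Suc by (simp add: lprod_Cons)
  also have "\<dots> = sm (z [^]\<^bsub>MM\<^esub> n) z" by (rule sm_comm)
  also have "\<dots> = z [^]\<^bsub>MM\<^esub> Suc n" by (simp add: MonR_simps)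
  finally show ?case .
qed

lemma atom_iff: "atom MM z \<longleftrightarrow> z \<in> carrier MM \<and> z \<noteq> UNIV \<and>
   (\<forall>B\<in>carrier MM. \<forall>C\<in>carrier MM. z = sm B C \<longrightarrow> B = UNIV \<or> C = UNIV)"
  unfolding atom_def Units_MM by (simp add: MonR_simps)

definition dg :: "('n::finite \<Rightarrow> nat) \<Rightarrow> nat" where "dg a = (\<Sum>i\<in>UNIV. a i)"

lemma dg_add: "dg (\<lambda>i. a i + b i) = dg a + dg b"
  unfolding dg_def by (simp add: sum.distrib)

lemma dg_pos: "up z \<Longrightarrow> z \<noteq> UNIV \<Longrightarrow> v \<in> z \<Longrightarrow> 1 \<le> dg v"
proof (rule ccontr)
  assume h: "up z" "z \<noteq> UNIV" "v \<in> z" "\<not> 1 \<le> dg v"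
  have "dg v = 0" using h(4) by simp
  hence "\<forall>i. v i = 0" unfolding dg_def by simp
  hence "v = (\<lambda>_. 0)" by auto
  thus False using h zero_in_up by blast
qed

lemma lprod_dg: "\<forall>z\<in>set xs. z \<in> carrier MM \<and> z \<noteq> UNIV \<Longrightarrow> v \<in> lprod MM xs \<Longrightarrow> length xs \<le> dg v"
proof (induction xs arbitrary: v)
  case Nil thus ?case by simp
next
  case (Cons z xs)
  from Cons.prems(2) obtain a b where ab: "a \<in> z" "b \<in> lprod MM xs" "v = (\<lambda>i. a i + b i)"
    by (auto simp: lprod_Cons elim: sm_memE)
  have "1 \<le> dg a" using Cons.prems(1) ab dg_pos by (auto simp: carrier_iff)
  moreover have "length xs \<le> dg b" using Cons ab by simp
  ultimately show ?case using ab by (simp add: dg_add)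
qed

lemma atom_nonunit: "atom MM z \<Longrightarrow> z \<in> carrier MM \<and> z \<noteq> UNIV"
  by (simp add: atom_iff)

lemma Lset_bound: "v \<in> I \<Longrightarrow> k \<in> Lset MM I \<Longrightarrow> k \<le> dg v"
  unfolding Lset_def using lprod_dg atom_nonunit by blast

lemma factorization_exists:
  "I \<in> carrier MM \<Longrightarrow> v \<in> I \<Longrightarrow> dg v \<le> n \<Longrightarrow> \<exists>xs. (\<forall>z\<in>set xs. atom MM z) \<and> I = lprod MM xs"
proof (induction n arbitrary: I v rule: less_induct)
  case (less n I v)
  show ?case
  proof (cases "I = UNIV")
    case True thus ?thesis by (intro exI[of _ "[]"]) (simp add: lprod_Nil)
  next
    case nU: False
    show ?thesis
    proof (cases "atom MM I")
      case True thus ?thesis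
        by (intro exI[of _ "[I]"]) (simp add: lprod_Cons lprod_Nil sm_UNIV atom_iff carrier_iff)
    next
      case False
      then obtain B C where BC: "B \<in> carrier MM" "C \<in> carrier MM" "I = sm B C" "B \<noteq> UNIV" "C \<noteq> UNIV"
        using less.prems nU by (auto simp: atom_iff)
      from less.prems(2) BC(3) obtain b c where bc: "b \<in> B" "c \<in> C" "v = (\<lambda>i. b i + c i)"
        by (auto elim: sm_memE)
      have "1 \<le> dg b" "1 \<le> dg c" using BC bc dg_pos by (auto simp: carrier_iff)
      hence lt: "dg b < n" "dg c < n" using less.prems(3) bc(3) by (auto simp: dg_add)
      obtain xs where xs: "\<forall>z\<in>set xs. atom MM z" "B = lprod MM xs"
        using less.IH[OF lt(1) BC(1) bc(1)] by auto
      obtain ys where ys: "\<forall>z\<in>set ys. atom MM z" "C = lprod MM ys"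
        using less.IH[OF lt(2) BC(2) bc(2)] by auto
      have "I = lprod MM (xs @ ys)"
        using xs ys BC(3) by (subst lprod_append) (auto simp: atom_iff)
      thus ?thesis using xs ys by (intro exI[of _ "xs @ ys"]) auto
    qed
  qed
qed

lemma BF: "BF_monoid MM"
  unfolding BF_monoid_def
proof
  fix I :: "('n::finite \<Rightarrow> nat) set" assume I: "I \<in> carrier MM"
  then obtain v where v: "v \<in> I" by (auto simp: carrier_iff)
  have "Lset MM I \<subseteq> {..dg v}" using Lset_bound[OF v] by auto
  hence "finite (Lset MM I)" using finite_subset by blast
  moreover have "Lset MM I \<noteq> {}"
    using factorization_exists[OF I v order_refl] unfolding Lset_def by auto
  ultimately show "finite (Lset MM I) \<and> Lset MM I \<noteq> {}" by blast
qed

lemma lprod_single: "z \<in> carrier MM \<Longrightarrow> lprod MM [z] = z"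
proof -
  assume "z \<in> carrier MM"
  hence "up z" by (simp add: carrier_iff)
  thus ?thesis unfolding lprod_Cons lprod_Nil by (rule sm_UNIV)
qed

lemma lprod_atoms_nonunit: fixes xs :: "('n::finite \<Rightarrow> nat) set list" shows "xs \<noteq> [] \<Longrightarrow> \<forall>z\<in>set xs. atom MM z \<Longrightarrow> lprod MM xs \<noteq> UNIV"
proof
  assume h: "xs \<noteq> []" "\<forall>z\<in>set xs. atom MM z" "lprod MM xs = UNIV"
  have "(\<lambda>_::'n. 0) \<in> lprod MM xs" using h(3) by simp
  moreover have "\<forall>z\<in>set xs. z \<in> carrier MM \<and> z \<noteq> UNIV" using h(2) atom_nonunit by blast
  ultimately have "length xs \<le> dg (\<lambda>_::'n. 0)" by (metis lprod_dg)
  moreover have "dg (\<lambda>_::'n. 0) = 0" by (simp add: dg_def)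
  ultimately show False using h(1) by simp
qed

lemma atom_in_list: "atom MM z \<Longrightarrow> set xs \<subseteq> carrier MM \<Longrightarrow> z = lprod MM xs \<Longrightarrow> z \<in> set xs"
proof (induction xs)
  case Nil thus ?case by (simp add: lprod_Nil atom_iff)
next
  case (Cons a xs)
  have c: "a \<in> carrier MM" "lprod MM xs \<in> carrier MM" using Cons.prems lprod_closed by auto
  have z: "z = sm a (lprod MM xs)" using Cons.prems by (simp add: lprod_Cons)
  hence "a = UNIV \<or> lprod MM xs = UNIV" using Cons.prems(1) c unfolding atom_iff by blast
  thus ?case
  proof
    assume "a = UNIV"
    hence "z = lprod MM xs" using z c by (simp add: sm_UNIV_left carrier_iff)
    thus ?case using Cons by simp
  next
    assume "lprod MM xs = UNIV"
    hence "z = a" using z c by (simp add: sm_UNIV carrier_iff)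
    thus ?case by simp
  qed
qed

lemma sub_units_MM: "S \<subseteq> carrier MM \<Longrightarrow> u \<in> sub_units MM S \<Longrightarrow> u = UNIV"
proof -
  assume h: "S \<subseteq> carrier MM" "u \<in> sub_units MM S"
  then obtain v where "u \<in> S" "sm u v = UNIV" unfolding sub_units_def by (auto simp: MonR_simps)
  moreover have "up u" using h \<open>u \<in> S\<close> by (auto simp: carrier_iff)
  ultimately show ?thesis using sm_UNIV_imp by blast
qed

lemma carrier_dcs: "div_closed_submonoid MM (carrier MM)"
proof -
  interpret comm_monoid MM by (rule MonR_comm_monoid)
  show ?thesis unfolding div_closed_submonoid_def by auto
qed

lemma (in comm_group) inv_mult_cancel: "a \<in> carrier G \<Longrightarrow> u \<in> carrier G \<Longrightarrow> inv (a \<otimes> u) \<otimes> u = inv a"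
  by (simp add: inv_mult m_assoc)

lemma lprod_filter: "set xs \<subseteq> carrier MM \<Longrightarrow>
  lprod MM xs = sm (lprod MM (filter P xs)) (lprod MM (filter (\<lambda>z. \<not> P z) xs))"
proof (induction xs)
  case Nil thus ?case by (simp add: lprod_Nil sm_UNIV up_def)
next
  case (Cons a xs)
  hence IH: "lprod MM xs = sm (lprod MM (filter P xs)) (lprod MM (filter (\<lambda>z. \<not> P z) xs))" by simp
  show ?case
  proof (cases "P a")
    case True thus ?thesis using IH by (simp add: lprod_Cons sm_assoc)
  next
    case False
    have "sm a (sm F G) = sm F (sm a G)" for F G
      by (metis sm_assoc sm_comm)
    thus ?thesis using IH False by (simp add: lprod_Cons)
  qed
qed

definition XIc :: "'n \<Rightarrow> nat \<Rightarrow> ('n \<Rightarrow> nat) set" where "XIc x c = {a. c \<le> a x}"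

definition mon :: "'n \<Rightarrow> 'n \<Rightarrow> nat \<Rightarrow> nat \<Rightarrow> ('n \<Rightarrow> nat)" where
  "mon x y i j = (\<lambda>z. if z = x then i else if z = y then j else 0)"

definition IS :: "'n \<Rightarrow> 'n \<Rightarrow> nat \<Rightarrow> nat set \<Rightarrow> ('n \<Rightarrow> nat) set" where
  "IS x y e S = {a. \<exists>i\<in>S. i \<le> a x \<and> e - i \<le> a y}"

definition XYp :: "'n \<Rightarrow> 'n \<Rightarrow> nat \<Rightarrow> ('n \<Rightarrow> nat) set" where
  "XYp x y m = {a. m \<le> a x + a y}"

context
  fixes x y :: "'n::finite"
  assumes xy: "x \<noteq> y"
begin

lemma mon_x[simp]: "mon x y i j x = i" and mon_y[simp]: "mon x y i j y = j"
  using xy by (auto simp: mon_def)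

lemma mon_o: "z \<noteq> x \<Longrightarrow> z \<noteq> y \<Longrightarrow> mon x y i j z = 0"
  by (auto simp: mon_def)

lemma IS_carrier: "S \<noteq> {} \<Longrightarrow> IS x y e S \<in> carrier MM"
proof -
  assume "S \<noteq> {}"
  then obtain i where "i \<in> S" by auto
  hence "mon x y i (e - i) \<in> IS x y e S" by (auto simp: IS_def)
  moreover have "up (IS x y e S)" unfolding up_def IS_def le_fun_def
    by (auto, meson order_trans)
  ultimately show ?thesis by (auto simp: carrier_iff)
qed

lemma IS_nonunit: "1 \<le> e \<Longrightarrow> IS x y e S \<noteq> UNIV"
proof
  assume "1 \<le> e" "IS x y e S = UNIV"
  hence "(\<lambda>_. 0) \<in> IS x y e S" by simp
  thus False using \<open>1 \<le> e\<close> by (auto simp: IS_def)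
qed

lemma coords:
  assumes "mon x y i j = (\<lambda>z. b z + c z)"
  shows "b x + c x = i" "b y + c y = j" "\<And>z. z \<noteq> x \<Longrightarrow> z \<noteq> y \<Longrightarrow> b z = 0 \<and> c z = 0"
proof -
  have h: "\<And>z. mon x y i j z = b z + c z" using assms by metis
  show "b x + c x = i" using h[of x] by simp
  show "b y + c y = j" using h[of y] by simp
  fix z assume "z \<noteq> x" "z \<noteq> y" thus "b z = 0 \<and> c z = 0" using h[of z] mon_o by simp
qed

lemma zero_vec: "(\<And>z. z \<noteq> x \<Longrightarrow> z \<noteq> y \<Longrightarrow> b z = 0) \<Longrightarrow> b x = 0 \<Longrightarrow> b y = 0 \<Longrightarrow> b = (\<lambda>_. 0)"
  by (rule ext) metis

lemma IS_split:
  assumes S: "S \<subseteq> {..e}" "0 \<in> S" "e \<in> S" "1 \<le> e"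
    and BC: "B \<in> carrier MM" "C \<in> carrier MM" "IS x y e S = sm B C" "B \<noteq> UNIV" "C \<noteq> UNIV"
  shows "\<exists>u v. 1 \<le> u \<and> 1 \<le> v \<and> u + v = e \<and> u \<in> S \<and> v \<in> S \<and> (1 \<in> S \<longrightarrow> 1 + v \<in> S \<or> 1 + u \<in> S)"
proof -
  have upB: "up B" and upC: "up C" using BC by (auto simp: carrier_iff)
  have P: "\<exists>i\<in>S. i \<le> p x + q x \<and> e - i \<le> p y + q y" if "p \<in> B" "q \<in> C" for p q
  proof -
    have "(\<lambda>z. p z + q z) \<in> IS x y e S" using BC(3) sm_mem[OF that] by simp
    thus ?thesis by (simp add: IS_def)
  qed
  have Sle: "\<And>i. i \<in> S \<Longrightarrow> i \<le> e" using S(1) by auto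
  have "mon x y 0 e \<in> sm B C" using BC(3)[symmetric] S by (auto simp: IS_def)
  then obtain b0 c0 where b0: "b0 \<in> B" "c0 \<in> C" "mon x y 0 e = (\<lambda>z. b0 z + c0 z)" by (rule sm_memE)
  note k0 = coords[OF b0(3)]
  have "mon x y e 0 \<in> sm B C" using BC(3)[symmetric] S by (auto simp: IS_def)
  then obtain b1 c1 where b1: "b1 \<in> B" "c1 \<in> C" "mon x y e 0 = (\<lambda>z. b1 z + c1 z)" by (rule sm_memE)
  note k1 = coords[OF b1(3)]
  obtain i1 where i1: "i1 \<in> S" "i1 \<le> b0 x + c1 x" "e - i1 \<le> b0 y + c1 y" using P[OF b0(1) b1(2)] by blast
  obtain i2 where i2: "i2 \<in> S" "i2 \<le> b1 x + c0 x" "e - i2 \<le> b1 y + c0 y" using P[OF b1(1) b0(2)] by blast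
  have i1e: "i1 \<le> e" "i2 \<le> e" using Sle i1 i2 by auto
  define u where "u = b0 y"
  define v where "v = c0 y"
  have uv: "u + v = e" "b1 x = u" "c1 x = v" "i1 = v" "i2 = u"
    using k0 k1 i1 i2 i1e unfolding u_def v_def by linarith+
  have vS: "v \<in> S" and uS: "u \<in> S" using uv i1 i2 by auto
  have u1: "1 \<le> u"
  proof (rule ccontr)
    assume "\<not> 1 \<le> u"
    hence "b0 = (\<lambda>_. 0)" using k0 unfolding u_def by (intro zero_vec) auto
    thus False using b0 upB BC(4) zero_in_up by auto
  qed
  have v1: "1 \<le> v"
  proof (rule ccontr)
    assume "\<not> 1 \<le> v"
    hence "c0 = (\<lambda>_. 0)" using k0 unfolding v_def by (intro zero_vec) auto
    thus False using b0 upC BC(5) zero_in_up by auto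
  qed
  have "1 \<in> S \<longrightarrow> 1 + v \<in> S \<or> 1 + u \<in> S"
  proof
    assume "1 \<in> S"
    hence "mon x y 1 (e - 1) \<in> sm B C" using BC(3)[symmetric] S by (auto simp: IS_def)
    then obtain b2 c2 where b2: "b2 \<in> B" "c2 \<in> C" "mon x y 1 (e - 1) = (\<lambda>z. b2 z + c2 z)" by (rule sm_memE)
    note k2 = coords[OF b2(3)]
    obtain i3 where i3: "i3 \<in> S" "i3 \<le> b2 x + c0 x" "e - i3 \<le> b2 y + c0 y" using P[OF b2(1) b0(2)] by blast
    obtain i4 where i4: "i4 \<in> S" "i4 \<le> b1 x + c2 x" "e - i4 \<le> b1 y + c2 y" using P[OF b1(1) b2(2)] by blast
    have i34: "i3 \<le> e" "i4 \<le> e" using Sle i3 i4 by auto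
    have s2: "b2 x + b2 y = u" using k0(1,2) k1(1,2) k2(1,2) i3 i4 i34 uv S(4) unfolding u_def v_def by linarith
    show "1 + v \<in> S \<or> 1 + u \<in> S"
    proof (cases "b2 x = 1")
      case True
      obtain i5 where i5: "i5 \<in> S" "i5 \<le> b2 x + c1 x" "e - i5 \<le> b2 y + c1 y" using P[OF b2(1) b1(2)] by blast
      have "i5 \<le> e" using Sle i5 by auto
      hence "i5 = 1 + v" using i5 True s2 k1(1,2) k2(1,2) uv S(4) by linarith
      thus ?thesis using i5 by simp
    next
      case False
      hence c2x: "c2 x = 1" "b2 x = 0" using k2 by linarith+
      obtain i6 where i6: "i6 \<in> S" "i6 \<le> b1 x + c2 x" "e - i6 \<le> b1 y + c2 y" using P[OF b1(1) b2(2)] by blast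
      have "i6 \<le> e" using Sle i6 by auto
      hence "i6 = 1 + u" using i6 c2x s2 k1(1,2) k2(1,2) uv S(4) by linarith
      thus ?thesis using i6 by simp
    qed
  qed
  thus ?thesis using u1 v1 uv uS vS by blast
qed

lemma IS_atom:
  assumes S: "S \<subseteq> {..e}" "0 \<in> S" "e \<in> S" "1 \<le> e"
    and no: "\<And>u v. 1 \<le> u \<Longrightarrow> 1 \<le> v \<Longrightarrow> u + v = e \<Longrightarrow> u \<in> S \<Longrightarrow> v \<in> S \<Longrightarrow>
          (1 \<in> S \<longrightarrow> 1 + v \<in> S \<or> 1 + u \<in> S) \<Longrightarrow> False"
  shows "atom MM (IS x y e S)"
  unfolding atom_iff
  using IS_carrier[of S e] IS_nonunit[of e S] IS_split[OF S] no S by blast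

lemma IS_prod:
  assumes SA: "SA \<subseteq> {..d}" and SB: "SB \<subseteq> {..e}" and cov: "\<And>t. t \<le> d + e \<Longrightarrow> \<exists>i\<in>SA. \<exists>j\<in>SB. t = i + j"
  shows "sm (IS x y d SA) (IS x y e SB) = XYp x y (d + e)"
proof
  show "sm (IS x y d SA) (IS x y e SB) \<subseteq> XYp x y (d + e)"
  proof
    fix v assume "v \<in> sm (IS x y d SA) (IS x y e SB)"
    then obtain a b where ab: "a \<in> IS x y d SA" "b \<in> IS x y e SB" "v = (\<lambda>z. a z + b z)" by (rule sm_memE)
    obtain i where i: "i \<in> SA" "i \<le> a x" "d - i \<le> a y" using ab(1) by (auto simp: IS_def)
    obtain j where j: "j \<in> SB" "j \<le> b x" "e - j \<le> b y" using ab(2) by (auto simp: IS_def)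
    have "i \<le> d" "j \<le> e" using i j SA SB by auto
    thus "v \<in> XYp x y (d + e)" using i j ab(3) by (simp add: XYp_def)
  qed
  show "XYp x y (d + e) \<subseteq> sm (IS x y d SA) (IS x y e SB)"
  proof
    fix v assume v: "v \<in> XYp x y (d + e)"
    hence v': "d + e \<le> v x + v y" by (simp add: XYp_def)
    define t where "t = min (v x) (d + e)"
    obtain i j where ij: "i \<in> SA" "j \<in> SB" "t = i + j" using cov[of t] unfolding t_def by auto
    have ide: "i \<le> d" "j \<le> e" using ij SA SB by auto
    define a where "a = mon x y i (d - i)"
    define b where "b = (\<lambda>z. v z - a z)"
    have ax: "a x = i" "a y = d - i" unfolding a_def by simp_all
    have ale: "a z \<le> v z" for z
    proof (cases "z = x \<or> z = y")
      case True thus ?thesis using ax ij ide v' unfolding t_def by auto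
    next
      case False thus ?thesis unfolding a_def by (simp add: mon_o)
    qed
    have "a \<in> IS x y d SA" using ij(1) ax by (auto simp: IS_def)
    moreover have "b \<in> IS x y e SB" using ij ide ax v' unfolding b_def IS_def t_def
      by (intro CollectI bexI[of _ j]) auto
    moreover have "v = (\<lambda>z. a z + b z)" unfolding b_def using ale by (auto intro!: ext)
    ultimately show "v \<in> sm (IS x y d SA) (IS x y e SB)" using sm_mem by metis
  qed
qed

lemma XYp_IS: "XYp x y m = IS x y m {..m}"
  unfolding XYp_def IS_def
  by (auto, rule_tac x="min m (xa x)" in bexI, auto)

lemma XYp_mult: "sm (XYp x y a) (XYp x y b) = XYp x y (a + b)"
proof -
  have "sm (IS x y a {..a}) (IS x y b {..b}) = XYp x y (a+b)"
  proof (rule IS_prod)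
    fix t assume "t \<le> a + b"
    thus "\<exists>i\<in>{..a}. \<exists>j\<in>{..b}. t = i + j"
      by (intro bexI[of _ "min t a"] bexI[of _ "t - min t a"]) auto
  qed auto
  moreover have "XYp x y a = IS x y a {..a}" "XYp x y b = IS x y b {..b}" by (rule XYp_IS)+
  ultimately show ?thesis by simp
qed

lemma XY_XYp: "XY_ideal x y = XYp x y 1"
  unfolding XY_ideal_def XYp_def by auto

lemma XYp_carrier: "XYp x y m \<in> carrier MM"
  unfolding XYp_IS by (rule IS_carrier) auto

lemma XYp_nonunit: "1 \<le> m \<Longrightarrow> XYp x y m \<noteq> UNIV"
  unfolding XYp_IS by (rule IS_nonunit)

lemma XY_pow: "XY_ideal x y [^]\<^bsub>MM\<^esub> k = XYp x y k"
proof (induction k)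
  case 0 thus ?case by (simp add: XYp_def MonR_simps)
next
  case (Suc k)
  interpret comm_monoid MM by (rule MonR_comm_monoid)
  show ?case using Suc by (simp add: MonR_simps XY_XYp XYp_mult)
qed

lemma lprod_rep_XY: "lprod MM (replicate n (XYp x y 1)) = XYp x y n"
proof (induction n)
  case 0 thus ?case by (simp add: XYp_def lprod_Nil)
next
  case (Suc n) thus ?case using XYp_mult[of 1 n] by (simp add: lprod_Cons)
qed

lemma XY_atom: "atom MM (XYp x y 1)"
  unfolding XYp_IS by (rule IS_atom) auto

definition SBm :: "nat \<Rightarrow> nat set" where
  "SBm m = {i. i \<le> m - 1 \<and> (even i \<or> (odd m \<and> i = 1 \<and> 5 \<le> m) \<or> (even m \<and> i = m - 1))}"

lemma F2_atom: "2 \<le> m \<Longrightarrow> atom MM (IS x y (m - 1) (SBm m))"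
  by (rule IS_atom) (auto simp: SBm_def, presburger+)

lemma F2_prod: "2 \<le> m \<Longrightarrow> sm (XYp x y 1) (IS x y (m - 1) (SBm m)) = XYp x y m"
proof -
  assume m: "2 \<le> m"
  have "sm (IS x y 1 {..1}) (IS x y (m - 1) (SBm m)) = XYp x y (1 + (m - 1))"
  proof (rule IS_prod)
    fix t assume t: "t \<le> 1 + (m - 1)"
    show "\<exists>i\<in>{..1}. \<exists>j\<in>SBm m. t = i + j"
    proof (cases "even t \<and> t \<le> m - 1")
      case True thus ?thesis by (intro bexI[of _ 0] bexI[of _ t]) (auto simp: SBm_def)
    next
      case False
      hence "t - 1 \<in> SBm m" using t m unfolding SBm_def by auto presburger+
      moreover have "t = 1 + (t - 1)" using False by (cases t) auto
      ultimately show ?thesis by (intro bexI[of _ 1] bexI[of _ "t - 1"]) auto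
    qed
  qed (auto simp: SBm_def)
  moreover have "XYp x y 1 = IS x y 1 {..1}" by (rule XYp_IS)
  ultimately show ?thesis using m by simp
qed

lemma dg_mon: "dg (mon x y i j) = i + j"
proof -
  have "mon x y i j = (\<lambda>z. (if z = x then i else 0) + (if z = y then j else 0))"
    using xy by (auto simp: mon_def intro!: ext)
  thus ?thesis unfolding dg_def by (simp add: sum.distrib)
qed

lemma not_atom_XYp: "2 \<le> k \<Longrightarrow> \<not> atom MM (XYp x y k)"
proof
  assume k: "2 \<le> k" and a: "atom MM (XYp x y k)"
  have "XYp x y k = sm (XYp x y 1) (XYp x y (k - 1))" using XYp_mult[of 1 "k - 1"] k by simp
  moreover have "XYp x y 1 \<noteq> UNIV" "XYp x y (k - 1) \<noteq> UNIV" using XYp_nonunit k by auto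
  moreover have "XYp x y 1 \<in> carrier MM" "XYp x y (k - 1) \<in> carrier MM" using XYp_carrier by auto
  moreover have "\<forall>B\<in>carrier MM. \<forall>C\<in>carrier MM. XYp x y k = sm B C \<longrightarrow> B = UNIV \<or> C = UNIV"
    using a unfolding atom_iff by (elim conjE)
  ultimately show False by metis
qed

lemma Lset_XY: "2 \<le> k \<Longrightarrow> Lset MM (XYp x y k) = {2..k}"
proof
  assume k: "2 \<le> k"
  show "Lset MM (XYp x y k) \<subseteq> {2..k}"
  proof
    fix n assume n: "n \<in> Lset MM (XYp x y k)"
    then obtain xs where xs: "length xs = n" "\<forall>z\<in>set xs. atom MM z" "XYp x y k = lprod MM xs"
      unfolding Lset_def by blast
    have "mon x y k 0 \<in> XYp x y k" by (simp add: XYp_def)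
    hence "n \<le> k" using Lset_bound[OF _ n] dg_mon by fastforce
    moreover have "n \<noteq> 0" using xs XYp_nonunit[of k] k by (auto simp: lprod_Nil)
    moreover have "n \<noteq> 1"
    proof
      assume "n = 1"
      then obtain z where "xs = [z]" using xs(1) by (cases xs) auto
      hence "XYp x y k = z" "atom MM z" using xs lprod_single atom_nonunit by auto
      thus False using not_atom_XYp[OF k] by simp
    qed
    ultimately show "n \<in> {2..k}" by auto
  qed
  show "{2..k} \<subseteq> Lset MM (XYp x y k)"
  proof
    fix n assume n: "n \<in> {2..k}"
    define m where "m = k + 2 - n"
    have m: "2 \<le> m" using n unfolding m_def by auto
    define xs where "xs = [XYp x y 1, IS x y (m - 1) (SBm m)] @ replicate (n - 2) (XYp x y 1)"
    have at: "\<forall>z\<in>set xs. atom MM z" unfolding xs_def using XY_atom F2_atom[OF m] by auto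
    have r: "lprod MM (replicate (n - 2) (XYp x y 1)) = XYp x y (n-2)" by (rule lprod_rep_XY)
    have "lprod MM xs = sm (XYp x y 1) (sm (IS x y (m - 1) (SBm m)) (XYp x y (n - 2)))"
      unfolding xs_def by (simp only: lprod_Cons append_Cons append_Nil r)
    also have "\<dots> = sm (XYp x y m) (XYp x y (n - 2))" by (subst sm_assoc[symmetric], subst F2_prod[OF m], rule refl)
    also have "\<dots> = XYp x y k"
    proof -
      have "m + (n - 2) = k" using n unfolding m_def by auto
      thus ?thesis by (simp add: XYp_mult)
    qed
    finally have "XYp x y k = lprod MM xs" by simp
    moreover have "length xs = n" using n unfolding xs_def by (simp, arith)
    ultimately show "n \<in> Lset MM (XYp x y k)" using at unfolding Lset_def by blast
  qed
qed

lemma Uk_MM: "2 \<le> k \<Longrightarrow> Uk (MonR :: ('n \<Rightarrow> nat) set monoid) k = {2..}"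
proof
  assume k: "2 \<le> k"
  show "Uk (MonR :: ('n \<Rightarrow> nat) set monoid) k \<subseteq> {2..}"
  proof
    fix n assume "n \<in> Uk (MonR :: ('n \<Rightarrow> nat) set monoid) k"
    then obtain L where L: "L \<in> LL (MonR :: ('n \<Rightarrow> nat) set monoid)" "k \<in> L" "n \<in> L" unfolding Uk_def by blast
    then obtain a :: "('n \<Rightarrow> nat) set" where a: "a \<in> carrier MM" "k \<in> Lset MM a" "n \<in> Lset MM a"
      unfolding LL_def by blast
    obtain ys where ys: "length ys = k" "\<forall>z\<in>set ys. atom MM z" "a = lprod MM ys"
      using a(2) unfolding Lset_def by blast
    obtain xs where xs: "length xs = n" "\<forall>z\<in>set xs. atom MM z" "a = lprod MM xs"
      using a(3) unfolding Lset_def by blast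
    have ysne: "ys \<noteq> []" using ys k by auto
    have "n \<noteq> 0"
    proof
      assume "n = 0"
      hence "a = UNIV" using xs by (simp add: lprod_Nil)
      thus False using lprod_atoms_nonunit[OF ysne ys(2)] ys(3) by simp
    qed
    moreover have "n \<noteq> 1"
    proof
      assume "n = 1"
      then obtain z where "xs = [z]" using xs(1) by (cases xs) auto
      hence za: "a = z" "atom MM z" using xs lprod_single atom_nonunit by auto
      obtain w ws where ws: "ys = w # ws" using ysne by (cases ys) auto
      have wsne: "ws \<noteq> []" using ys(1) ws k by auto
      have "a = sm w (lprod MM ws)" using ys ws by (simp add: lprod_Cons)
      moreover have "w \<in> carrier MM" "w \<noteq> UNIV" using ys ws atom_nonunit by auto
      moreover have "lprod MM ws \<in> carrier MM" using ys ws lprod_closed atom_nonunit by auto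
      moreover have "lprod MM ws \<noteq> UNIV" using lprod_atoms_nonunit[OF wsne] ys ws by auto
      ultimately show False using za unfolding atom_iff by blast
    qed
    ultimately show "n \<in> {2..}" by auto
  qed
  show "{2..} \<subseteq> Uk (MonR :: ('n \<Rightarrow> nat) set monoid) k"
  proof
    fix n :: nat assume "n \<in> {2..}"
    hence "2 \<le> max n k" "n \<in> Lset MM (XYp x y (max n k))" "k \<in> Lset MM (XYp x y (max n k))"
      using k Lset_XY[of "max n k"] by auto
    thus "n \<in> Uk (MonR :: ('n \<Rightarrow> nat) set monoid) k" using XYp_carrier unfolding Uk_def LL_def by blast
  qed
qed

definition Ad :: "nat \<Rightarrow> ('n \<Rightarrow> nat) set" where "Ad d = IS x y d {0, d}"

lemma Ad_atom: "1 \<le> d \<Longrightarrow> atom MM (Ad d)"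
  unfolding Ad_def by (rule IS_atom) auto

lemma Ad_carrier: "Ad d \<in> carrier MM"
  unfolding Ad_def by (rule IS_carrier) auto

lemma Ad_prod: "1 \<le> d \<Longrightarrow> sm (Ad d) (XYp x y (d - 1)) = XYp x y (2 * d - 1)"
proof -
  assume d: "1 \<le> d"
  have "sm (IS x y d {0, d}) (IS x y (d - 1) {..d - 1}) = XYp x y (d + (d - 1))"
  proof (rule IS_prod)
    fix t assume t: "t \<le> d + (d - 1)"
    show "\<exists>i\<in>{0, d}. \<exists>j\<in>{..d - 1}. t = i + j"
    proof (cases "d \<le> t")
      case True thus ?thesis using t by (intro bexI[of _ d] bexI[of _ "t - d"]) auto
    next
      case False thus ?thesis by (intro bexI[of _ 0] bexI[of _ t]) auto
    qed
  qed auto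
  moreover have "XYp x y (d - 1) = IS x y (d - 1) {..d - 1}" by (rule XYp_IS)
  moreover have "d + (d - 1) = 2 * d - 1" using d by simp
  ultimately show ?thesis unfolding Ad_def by simp
qed

lemma Ad_inj: "inj_on Ad {1..}"
proof
  fix d d' :: nat assume "d \<in> {1..}" "d' \<in> {1..}" and eq: "Ad d = Ad d'"
  have "mon x y d 0 \<in> Ad d" "mon x y d' 0 \<in> Ad d'" unfolding Ad_def IS_def by auto
  hence "mon x y d 0 \<in> Ad d'" "mon x y d' 0 \<in> Ad d" using eq by auto
  hence "d' \<le> d" "d \<le> d'" using \<open>d \<in> {1..}\<close> \<open>d' \<in> {1..}\<close> unfolding Ad_def IS_def by auto
  thus "d = d'" by simp
qed

lemma pow_in_dcs: "div_closed_submonoid MM S \<Longrightarrow> a \<in> S \<Longrightarrow> a [^]\<^bsub>MM\<^esub> (n::nat) \<in> S"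
proof (induction n)
  case 0 thus ?case by (simp add: div_closed_submonoid_def)
next
  case (Suc n)
  interpret comm_monoid MM by (rule MonR_comm_monoid)
  show ?case using Suc unfolding div_closed_submonoid_def by simp
qed

lemma Ad_in_hull: "1 \<le> d \<Longrightarrow> Ad d \<in> dc_hull MM (XY_ideal x y)"
  unfolding dc_hull_def
proof
  fix S assume "1 \<le> d" "S \<in> {S. div_closed_submonoid MM S \<and> XY_ideal x y \<in> S}"
  hence d: "1 \<le> d" and S: "div_closed_submonoid MM S" "XY_ideal x y \<in> S" by auto
  have "XY_ideal x y [^]\<^bsub>MM\<^esub> (2 * d - 1) \<in> S" using pow_in_dcs[OF S] .
  hence "XYp x y (2 * d - 1) \<in> S" by (simp add: XY_pow)
  moreover have "divides_in MM (Ad d) (XYp x y (2 * d - 1))"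
    unfolding divides_in_def
    by (rule bexI[of _ "XYp x y (d - 1)"]) (use Ad_prod[OF d] XYp_carrier in \<open>auto simp: MonR_simps\<close>)
  ultimately show "Ad d \<in> S" using S(1) Ad_carrier unfolding div_closed_submonoid_def by blast
qed

lemma not_lfg: "\<not> locally_fg (MonR :: ('n \<Rightarrow> nat) set monoid)"
proof
  assume "locally_fg (MonR :: ('n \<Rightarrow> nat) set monoid)"
  hence "fg_up_to_units MM (dc_hull MM (XY_ideal x y))"
    unfolding locally_fg_def using XYp_carrier XY_XYp by auto
  then obtain E where E: "finite E" "E \<subseteq> dc_hull MM (XY_ideal x y)"
    "\<forall>s\<in>dc_hull MM (XY_ideal x y). \<exists>u\<in>sub_units MM (dc_hull MM (XY_ideal x y)).
        \<exists>xs. set xs \<subseteq> E \<and> s = u \<otimes>\<^bsub>MM\<^esub> lprod MM xs"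
    unfolding fg_up_to_units_def by blast
  have hc: "dc_hull MM (XY_ideal x y) \<subseteq> carrier MM"
    unfolding dc_hull_def using carrier_dcs XYp_carrier XY_XYp by auto
  have "Ad d \<in> E" if d: "d \<in> {1..}" for d
  proof -
    obtain u xs where u: "u \<in> sub_units MM (dc_hull MM (XY_ideal x y))" "set xs \<subseteq> E"
      "Ad d = u \<otimes>\<^bsub>MM\<^esub> lprod MM xs"
      using E(3) Ad_in_hull[of d] d by auto
    have "u = UNIV" using sub_units_MM[OF hc u(1)] .
    moreover have xsc: "set xs \<subseteq> carrier MM" using u(2) E(2) hc by auto
    ultimately have "Ad d = lprod MM xs" using u(3) lprod_closed[OF xsc]
      by (simp add: MonR_simps sm_UNIV_left carrier_iff)
    moreover have d1: "1 \<le> d" using d by simp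
    ultimately have "Ad d \<in> set xs" using atom_in_list[OF Ad_atom[OF d1] xsc] by blast
    thus ?thesis using u(2) by auto
  qed
  hence "Ad ` {1..} \<subseteq> E" by auto
  hence "finite (Ad ` {1..})" using E(1) finite_subset by blast
  hence "finite {1::nat..}" using finite_imageD Ad_inj by blast
  thus False using infinite_Ici[of "1::nat"] by simp
qed

lemma not_TK: "\<not> transfer_Krull (MonR :: ('n \<Rightarrow> nat) set monoid) TYPE('g)"
proof
  assume "transfer_Krull (MonR :: ('n \<Rightarrow> nat) set monoid) TYPE('g)"
  then obtain G :: "'g monoid" and D :: "'g set" and \<theta> :: "('n \<Rightarrow> nat) set \<Rightarrow> 'g" where K: "Krull_in G D" and T: "transfer_hom MM G D \<theta>"
    unfolding transfer_Krull_def by blast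
  have cg: "comm_group G" and DG: "D \<subseteq> carrier G" and Dm: "\<forall>u\<in>D. \<forall>v\<in>D. u \<otimes>\<^bsub>G\<^esub> v \<in> D"
    using K unfolding Krull_in_def by auto
  interpret comm_group G by (rule cg)
  note T' = T[unfolded transfer_hom_def MonR_simps(2)]
  have th: "\<forall>a\<in>carrier MM. \<theta> a \<in> D" using T' by (elim conjE)
  have tm: "\<forall>a\<in>carrier MM. \<forall>b\<in>carrier MM. \<theta> (sm a b) = \<theta> a \<otimes>\<^bsub>G\<^esub> \<theta> b" using T' by (elim conjE)
  have tu: "{a \<in> carrier MM. \<theta> a \<in> D_units G D} = Units MM" using T' by (elim conjE)
  have ts: "\<forall>a\<in>carrier MM. \<forall>\<beta>\<in>D. \<forall>\<gamma>\<in>D. \<theta> a = \<beta> \<otimes>\<^bsub>G\<^esub> \<gamma> \<longrightarrow>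
        (\<exists>b\<in>carrier MM. \<exists>c\<in>carrier MM. a = sm b c \<and>
           (\<exists>u\<in>D_units G D. \<theta> b = \<beta> \<otimes>\<^bsub>G\<^esub> u) \<and> (\<exists>u\<in>D_units G D. \<theta> c = \<gamma> \<otimes>\<^bsub>G\<^esub> u))"
    using T' by (elim conjE)
  define P where "P = XYp x y 1"
  define Q where "Q = Ad 2"
  have Pc: "P \<in> carrier MM" and Qc: "Q \<in> carrier MM" unfolding P_def Q_def using XYp_carrier Ad_carrier by auto
  have PPc: "sm P P \<in> carrier MM" using Pc by (simp add: carrier_iff up_sm sm_ne)
  have "sm P (sm P P) = XYp x y 3" unfolding P_def by (simp add: XYp_mult numeral_3_eq_3)
  moreover have "sm P Q = XYp x y 3" using Ad_prod[of 2] unfolding P_def Q_def by (simp add: sm_comm)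
  ultimately have eq: "sm P (sm P P) = sm P Q" by simp
  have tP: "\<theta> P \<in> carrier G" "\<theta> Q \<in> carrier G" using th Pc Qc DG by auto
  have tPD: "\<theta> P \<in> D" using th Pc by auto
  have "\<theta> P \<otimes>\<^bsub>G\<^esub> (\<theta> P \<otimes>\<^bsub>G\<^esub> \<theta> P) = \<theta> P \<otimes>\<^bsub>G\<^esub> \<theta> Q"
    using arg_cong[OF eq, of \<theta>] tm Pc Qc PPc by simp
  hence tQ: "\<theta> Q = \<theta> P \<otimes>\<^bsub>G\<^esub> \<theta> P" using tP by simp
  obtain b c where bc: "b \<in> carrier MM" "c \<in> carrier MM" "Q = sm b c"
    and bu: "\<exists>u\<in>D_units G D. \<theta> b = \<theta> P \<otimes>\<^bsub>G\<^esub> u" and cu: "\<exists>u\<in>D_units G D. \<theta> c = \<theta> P \<otimes>\<^bsub>G\<^esub> u"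
    using ts Qc tPD tQ by blast
  have "atom MM (Ad 2)" by (rule Ad_atom) simp
  hence "b = UNIV \<or> c = UNIV" using bc unfolding Q_def atom_iff by blast
  then obtain w where w: "w = UNIV" "\<exists>u\<in>D_units G D. \<theta> w = \<theta> P \<otimes>\<^bsub>G\<^esub> u" using bu cu by blast
  then obtain u where u: "u \<in> D_units G D" "\<theta> w = \<theta> P \<otimes>\<^bsub>G\<^esub> u" by blast
  have "(UNIV :: ('n \<Rightarrow> nat) set) \<in> Units MM" by (simp add: Units_MM)
  hence "\<theta> w \<in> D_units G D" using tu w(1) by blast
  hence i1: "inv\<^bsub>G\<^esub> (\<theta> P \<otimes>\<^bsub>G\<^esub> u) \<in> D" using u(2) unfolding D_units_def by auto
  have uD: "u \<in> D" "u \<in> carrier G" using u(1) DG unfolding D_units_def by auto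
  have "inv\<^bsub>G\<^esub> (\<theta> P) = inv\<^bsub>G\<^esub> (\<theta> P \<otimes>\<^bsub>G\<^esub> u) \<otimes>\<^bsub>G\<^esub> u"
    using inv_mult_cancel tP uD by simp
  hence "inv\<^bsub>G\<^esub> (\<theta> P) \<in> D" using Dm i1 uD by simp
  hence "\<theta> P \<in> D_units G D" using tPD unfolding D_units_def by simp
  hence "P \<in> Units MM" using tu Pc by blast
  hence "P = UNIV" by (simp add: Units_MM)
  thus False using XYp_nonunit[of 1] unfolding P_def by simp
qed

lemma XIc_carrier: "XIc x c \<in> carrier MM"
proof -
  have "(\<lambda>_. c) \<in> XIc x c" by (simp add: XIc_def)
  moreover have "up (XIc x c)" unfolding up_def XIc_def le_fun_def by (auto, meson order_trans)
  ultimately show ?thesis by (auto simp: carrier_iff)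
qed

lemma XIc_nonunit: "1 \<le> c \<Longrightarrow> XIc x c \<noteq> UNIV"
proof
  assume "1 \<le> c" "XIc x c = UNIV"
  hence "(\<lambda>_. 0) \<in> XIc x c" by simp
  thus False using \<open>1 \<le> c\<close> by (simp add: XIc_def)
qed

lemma sm_XIc_iff: "up W \<Longrightarrow> v \<in> sm (XIc x c) W \<longleftrightarrow> c \<le> v x \<and> v(x := v x - c) \<in> W"
proof
  assume W: "up W" and vin: "v \<in> sm (XIc x c) W"
  from vin obtain a w where aw: "a \<in> XIc x c" "w \<in> W" "v = (\<lambda>z. a z + w z)" by (rule sm_memE)
  have "w \<le> v(x := v x - c)" using aw unfolding le_fun_def XIc_def by auto
  thus "c \<le> v x \<and> v(x := v x - c) \<in> W" using aw W unfolding up_def XIc_def by auto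
next
  assume W: "up W" and h: "c \<le> v x \<and> v(x := v x - c) \<in> W"
  have "(\<lambda>z. if z = x then c else 0) \<in> XIc x c" by (simp add: XIc_def)
  moreover have "v = (\<lambda>z. (if z = x then c else 0) + (v(x := v x - c)) z)" using h by (auto intro!: ext)
  ultimately show "v \<in> sm (XIc x c) W" using h sm_mem by metis
qed

lemma up_XIc: "up (XIc x c)"
  using XIc_carrier by (simp add: carrier_iff)

lemma XIc_0: "XIc x 0 = UNIV" by (simp add: XIc_def)

lemma lprod_rep_XI: "lprod MM (replicate n (XIc x 1)) = XIc x n"
proof (induction n)
  case 0 thus ?case by (simp add: lprod_Nil XIc_0)
next
  case (Suc n)
  have "v \<in> sm (XIc x 1) (XIc x n) \<longleftrightarrow> v \<in> XIc x (Suc n)" for v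
  proof -
    have "v \<in> sm (XIc x 1) (XIc x n) \<longleftrightarrow> 1 \<le> v x \<and> v(x := v x - 1) \<in> XIc x n"
      by (rule sm_XIc_iff[OF up_XIc])
    also have "\<dots> \<longleftrightarrow> v \<in> XIc x (Suc n)" by (auto simp: XIc_def)
    finally show ?thesis .
  qed
  hence "sm (XIc x 1) (XIc x n) = XIc x (Suc n)" by blast
  thus ?case using Suc by (simp add: lprod_Cons)
qed

lemma XI_atom: "atom MM (XIc x 1)"
  unfolding atom_iff
proof (intro conjI ballI impI)
  show "XIc x 1 \<in> carrier MM" by (rule XIc_carrier)
  show "XIc x 1 \<noteq> UNIV" by (rule XIc_nonunit) simp
  fix B C assume BC: "B \<in> carrier MM" "C \<in> carrier MM" "XIc x 1 = sm B C"
  have "mon x y 1 0 \<in> sm B C" using BC(3)[symmetric] by (simp add: XIc_def)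
  then obtain b c where bc: "b \<in> B" "c \<in> C" "mon x y 1 0 = (\<lambda>z. b z + c z)" by (rule sm_memE)
  note k = coords[OF bc(3)]
  show "B = UNIV \<or> C = UNIV"
  proof (cases "b x = 0")
    case True
    hence "b = (\<lambda>_. 0)" using k by (intro zero_vec) auto
    thus ?thesis using bc BC zero_in_up by (auto simp: carrier_iff)
  next
    case False
    hence "c = (\<lambda>_. 0)" using k by (intro zero_vec) auto
    thus ?thesis using bc BC zero_in_up by (auto simp: carrier_iff)
  qed
qed

lemma atom_xzero: "atom MM z \<Longrightarrow> z \<noteq> XIc x 1 \<Longrightarrow> \<exists>w\<in>z. w x = 0"
proof (rule ccontr)
  assume a: "atom MM z" and ne: "z \<noteq> XIc x 1" and "\<not> (\<exists>w\<in>z. w x = 0)"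
  hence pos: "\<And>w. w \<in> z \<Longrightarrow> 1 \<le> w x" by auto
  have zc: "z \<in> carrier MM" "z \<noteq> UNIV" using a atom_nonunit by auto
  hence upz: "up z" by (simp add: carrier_iff)
  define z' where "z' = {w. w(x := w x + 1) \<in> z}"
  obtain w0 where w0: "w0 \<in> z" using zc by (auto simp: carrier_iff)
  have "(w0(x := w0 x - 1))(x := (w0(x := w0 x - 1)) x + 1) = w0" using pos[OF w0] by (auto intro!: ext)
  hence "w0(x := w0 x - 1) \<in> z'" unfolding z'_def using w0 by simp
  moreover have "up z'" unfolding up_def z'_def
  proof (intro ballI allI impI CollectI)
    fix a b assume "a \<in> {w. w(x := w x + 1) \<in> z}" "a \<le> b"
    moreover have "a(x := a x + 1) \<le> b(x := b x + 1)" using \<open>a \<le> b\<close> by (auto simp: le_fun_def)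
    ultimately show "b(x := b x + 1) \<in> z" using upz unfolding up_def by blast
  qed
  ultimately have z'c: "z' \<in> carrier MM" by (auto simp: carrier_iff)
  have iff: "v \<in> z \<longleftrightarrow> v \<in> sm (XIc x 1) z'" for v
  proof -
    have "v \<in> sm (XIc x 1) z' \<longleftrightarrow> 1 \<le> v x \<and> (v(x := v x - 1))(x := v x - 1 + 1) \<in> z"
      using sm_XIc_iff[OF \<open>up z'\<close>] unfolding z'_def by simp
    also have "\<dots> \<longleftrightarrow> v \<in> z"
    proof
      assume h: "1 \<le> v x \<and> (v(x := v x - 1))(x := v x - 1 + 1) \<in> z"
      have eq: "(v(x := v x - 1))(x := v x - 1 + 1) = v" using h by (auto intro!: ext)
      from h have "(v(x := v x - 1))(x := v x - 1 + 1) \<in> z" by blast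
      thus "v \<in> z" by (simp only: eq)
    next
      assume "v \<in> z"
      moreover have "1 \<le> v x" using pos[OF \<open>v \<in> z\<close>] .
      moreover have "(v(x := v x - 1))(x := v x - 1 + 1) = v" using \<open>1 \<le> v x\<close> by (auto intro!: ext)
      ultimately show "1 \<le> v x \<and> (v(x := v x - 1))(x := v x - 1 + 1) \<in> z" by simp
    qed
    finally show "v \<in> z \<longleftrightarrow> v \<in> sm (XIc x 1) z'" by simp
  qed
  hence "z = sm (XIc x 1) z'" by blast
  hence "XIc x 1 = UNIV \<or> z' = UNIV" using a XIc_carrier z'c unfolding atom_iff by blast
  moreover have "XIc x 1 \<noteq> UNIV" by (rule XIc_nonunit) simp
  ultimately have "z' = UNIV" by simp
  hence "z = sm (XIc x 1) UNIV" using \<open>z = sm (XIc x 1) z'\<close> by simp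
  also have "\<dots> = XIc x 1" by (rule sm_UNIV[OF up_XIc])
  finally have "z = XIc x 1" .
  thus False using ne by simp
qed

lemma lprod_xzero: "\<forall>z\<in>set ys. \<exists>w\<in>z. w x = 0 \<Longrightarrow> \<exists>w\<in>lprod MM ys. w x = 0"
proof (induction ys)
  case Nil thus ?case by (intro bexI[of _ "\<lambda>_. 0"]) (auto simp: lprod_Nil)
next
  case (Cons z ys)
  then obtain w1 w2 where "w1 \<in> z" "w1 x = 0" "w2 \<in> lprod MM ys" "w2 x = 0" by auto
  thus ?case by (intro bexI[of _ "\<lambda>i. w1 i + w2 i"]) (auto simp: lprod_Cons intro: sm_mem)
qed

lemma XIc_cancel: "up W1 \<Longrightarrow> up W2 \<Longrightarrow> sm (XIc x c) W1 = sm (XIc x c) W2 \<Longrightarrow> W1 \<subseteq> W2"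
proof
  fix w assume h: "up W1" "up W2" "sm (XIc x c) W1 = sm (XIc x c) W2" "w \<in> W1"
  have e: "(w(x := w x + c))(x := (w(x := w x + c)) x - c) = w" by (auto intro!: ext)
  have "w(x := w x + c) \<in> sm (XIc x c) W1" using sm_XIc_iff[OF h(1)] e h(4) by simp
  hence "w(x := w x + c) \<in> sm (XIc x c) W2" using h(3) by simp
  thus "w \<in> W2" using sm_XIc_iff[OF h(2)] e by simp
qed

definition Ek :: "nat \<Rightarrow> nat \<Rightarrow> ('n \<Rightarrow> nat) set" where "Ek t k = sm (XIc x t) (XYp x y k)"

lemma Ek_carrier: "Ek t k \<in> carrier MM"
  unfolding Ek_def using XIc_carrier XYp_carrier by (simp add: carrier_iff up_sm sm_ne)

lemma up_XYp: "up (XYp x y k)" using XYp_carrier by (simp add: carrier_iff)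

lemma Lset_Ek: "2 \<le> k \<Longrightarrow> Lset MM (Ek t k) = {t + 2..t + k}"
proof
  assume k: "2 \<le> k"
  show "{t + 2..t + k} \<subseteq> Lset MM (Ek t k)"
  proof
    fix n assume n: "n \<in> {t + 2..t + k}"
    hence "n - t \<in> Lset MM (XYp x y k)" using Lset_XY[OF k] by auto
    then obtain ys where ys: "length ys = n - t" "\<forall>z\<in>set ys. atom MM z" "XYp x y k = lprod MM ys"
      unfolding Lset_def by blast
    define xs where "xs = replicate t (XIc x 1) @ ys"
    have r: "lprod MM (replicate t (XIc x 1)) = XIc x t" by (rule lprod_rep_XI)
    have "lprod MM xs = sm (lprod MM (replicate t (XIc x 1))) (lprod MM ys)" unfolding xs_def
      using ys XIc_carrier atom_nonunit by (intro lprod_append) auto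
    hence "lprod MM xs = sm (XIc x t) (XYp x y k)" using r ys(3) by simp
    moreover have "length xs = n" using ys n unfolding xs_def by auto
    moreover have "\<forall>z\<in>set xs. atom MM z" using ys XI_atom unfolding xs_def by auto
    ultimately show "n \<in> Lset MM (Ek t k)" unfolding Lset_def Ek_def by auto
  qed
  show "Lset MM (Ek t k) \<subseteq> {t + 2..t + k}"
  proof
    fix n assume n: "n \<in> Lset MM (Ek t k)"
    then obtain xs where xs: "length xs = n" "\<forall>z\<in>set xs. atom MM z" "Ek t k = lprod MM xs"
      unfolding Lset_def by blast
    have mtk: "mon x y t k \<in> Ek t k" unfolding Ek_def using sm_XIc_iff[OF up_XYp] xy
      by (simp add: XYp_def)
    hence "n \<le> t + k" using Lset_bound[OF mtk n] dg_mon by simp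
    moreover have "t + 2 \<le> n"
    proof -
      define F where "F = filter (\<lambda>z. z = XIc x 1) xs"
      define G where "G = filter (\<lambda>z. \<not> z = XIc x 1) xs"
      have xsc: "set xs \<subseteq> carrier MM" using xs atom_nonunit by auto
      have Gc: "set G \<subseteq> carrier MM" using xsc unfolding G_def by auto
      have len: "length F + length G = n" unfolding F_def G_def using xs(1) sum_length_filter_compl by blast
      have "F = replicate (length F) (XIc x 1)" unfolding F_def
        by (rule replicate_length_same[symmetric]) auto
      hence lF: "lprod MM F = XIc x (length F)" using lprod_rep_XI by metis
      define W where "W = lprod MM G"
      have Wc: "W \<in> carrier MM" unfolding W_def using lprod_closed[OF Gc] .
      hence upW: "up W" by (simp add: carrier_iff)
      have EW: "Ek t k = sm (XIc x (length F)) W"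
        using xs(3) lprod_filter[OF xsc, of "\<lambda>z. z = XIc x 1"] lF unfolding W_def F_def G_def by simp
      have "\<forall>z\<in>set G. \<exists>w\<in>z. w x = 0" unfolding G_def using xs(2) atom_xzero by auto
      then obtain w0 where w0: "w0 \<in> W" "w0 x = 0" using lprod_xzero unfolding W_def by blast
      have "w0(x := length F) \<in> sm (XIc x (length F)) W"
        using sm_XIc_iff[OF upW] w0 by (simp add: fun_upd_idem)
      hence "w0(x := length F) \<in> Ek t k" using EW by simp
      hence c1: "t \<le> length F" using sm_XIc_iff[OF up_XYp] unfolding Ek_def by simp
      have "mon x y t k \<in> sm (XIc x (length F)) W" using mtk EW by simp
      hence c2: "length F \<le> t" using sm_XIc_iff[OF upW] by simp
      have cF: "length F = t" using c1 c2 by simp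
      have "W = XYp x y k"
        using XIc_cancel[OF upW up_XYp] XIc_cancel[OF up_XYp upW] EW cF unfolding Ek_def by blast
      have "length G \<noteq> 0"
      proof
        assume "length G = 0"
        hence "W = UNIV" unfolding W_def by (simp add: lprod_Nil)
        thus False using \<open>W = XYp x y k\<close> XYp_nonunit k by simp
      qed
      moreover have "length G \<noteq> 1"
      proof
        assume "length G = 1"
        then obtain z where z: "G = [z]" by (cases G) auto
        hence "z \<in> set G" by simp
        hence "z \<in> set xs" unfolding G_def by simp
        hence "atom MM z" using xs by auto
        moreover have "W = z" using z Gc lprod_single unfolding W_def by auto
        ultimately show False using not_atom_XYp[OF k] \<open>W = XYp x y k\<close> by simp
      qed
      ultimately show ?thesis using len cF by linarith
    qed
    ultimately show "n \<in> {t + 2..t + k}" by simp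
  qed
qed

lemma rho_interval: "1 \<le> a \<Longrightarrow> a \<le> b \<Longrightarrow> rho {a..b} = real b / real a"
proof -
  assume ab: "1 \<le> a" "a \<le> b"
  have "{a..b} \<noteq> {0}" using ab by auto
  moreover have "Max {a..b} = b" by (rule Max_eqI) (use ab in auto)
  moreover have "Min {a..b} = a" by (rule Min_eqI) (use ab in auto)
  ultimately show ?thesis unfolding rho_def by simp
qed

lemma FE: "fully_elastic (MonR :: ('n \<Rightarrow> nat) set monoid)"
  unfolding fully_elastic_def
proof (intro allI impI)
  fix q :: rat assume "1 < q \<and> ereal (of_rat q) < rho_monoid (MonR :: ('n \<Rightarrow> nat) set monoid)"
  hence q1: "1 < q" by simp
  obtain p r where pr: "quotient_of q = (p, r)" by (cases "quotient_of q")
  have r0: "0 < r" using quotient_of_denom_pos[OF pr] .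
  have qdef: "q = of_int p / of_int r" using quotient_of_div[OF pr] .
  have "(1::rat) < of_int p / of_int r" using q1 qdef by simp
  hence "of_int r < (of_int p :: rat)" using r0 by (simp add: field_simps)
  hence rp: "r < p" by simp
  define t where "t = nat (2 * r - 2)"
  define k where "k = nat (2 * p - 2 * r + 2)"
  have k2: "2 \<le> k" using rp unfolding k_def by simp
  have tk: "int (t + k) = 2 * p" "int (t + 2) = 2 * r" using r0 rp unfolding t_def k_def by simp_all
  have L: "Lset MM (Ek t k) = {t + 2..t + k}" by (rule Lset_Ek[OF k2])
  have "rho {t + 2..t + k} = real (t + k) / real (t + 2)" by (rule rho_interval) (use k2 in auto)
  also have "\<dots> = real_of_int (2 * p) / real_of_int (2 * r)"
    using tk by (metis of_int_of_nat_eq)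
  also have "\<dots> = real_of_int p / real_of_int r" by simp
  also have "\<dots> = of_rat q" unfolding qdef by (simp add: of_rat_divide)
  finally have "rho (Lset MM (Ek t k)) = of_rat q" using L by simp
  moreover have "Lset MM (Ek t k) \<in> LL (MonR :: ('n \<Rightarrow> nat) set monoid)" unfolding LL_def using Ek_carrier by blast
  ultimately show "\<exists>L\<in>LL (MonR :: ('n \<Rightarrow> nat) set monoid). rho L = of_rat q" by blast
qed

end

theorem theorem4p5:
  fixes x y :: "'n::finite"
  assumes "x \<noteq> y"
  shows "BF_monoid (MonR :: ('n \<Rightarrow> nat) set monoid) \<and>
         \<not> locally_fg (MonR :: ('n \<Rightarrow> nat) set monoid) \<and>
         \<not> transfer_Krull (MonR :: ('n \<Rightarrow> nat) set monoid) TYPE('g) \<and>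
         (\<forall>k::nat. k \<ge> 2 \<longrightarrow> Uk (MonR :: ('n \<Rightarrow> nat) set monoid) k = {2..}) \<and>
         (\<forall>k::nat. k \<ge> 2 \<longrightarrow> Lset MonR (XY_ideal x y [^]\<^bsub>MonR\<^esub> k) = {2..k}) \<and>
         fully_elastic (MonR :: ('n \<Rightarrow> nat) set monoid)"
  using BF not_lfg[OF assms] not_TK[OF assms] Uk_MM[OF assms] Lset_XY[OF assms] XY_pow[OF assms] FE[OF assms]
  by simp

end
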